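(* Let $G$ be a connected graph, let $T$ be a spanning tree of $G$ rooted in $s$ which is an $\mathcal L$-tree of some DFS on $G$, and let $\sigma$ be a DFS order of the tree $T$ starting at $s$. Then $\sigma$ is a DFS order of $G$ and the $\mathcal L$-tree of $\sigma$ (with respect to $G$) is $T$.
   Context: Graphs are finite, simple, undirected. DFS: a search that starts at a vertex and repeatedly visits an unvisited neighbor of the most recently visited vertex that still has an unvisited neighbor; a DFS order of a graph is any order of its vertices produced this way. The $\mathcal L$-tree of a vertex order $(v_1,\dots,v_n)$ of a connected graph $G$ is the spanning tree rooted at $v_1$ with an edge from each $v_i$ ($i>1$) to its rightmost $G$-neighbor $v_j$ with $j<i$. A spanning tree $T$ rooted at $s$ is an $\mathcal L$-tree of DFS on $G$ if some DFS order of $G$ starting at $s$ has $\mathcal L$-tree $T$. *)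

theory Defs
  imports Main
begin

definition graph :: "'a set \<Rightarrow> ('a \<Rightarrow> 'a \<Rightarrow> bool) \<Rightarrow> bool" where
  "graph V E \<longleftrightarrow> finite V \<and> (\<forall>u v. E u v \<longrightarrow> E v u) \<and> (\<forall>u. \<not> E u u)
     \<and> (\<forall>u v. E u v \<longrightarrow> u \<in> V \<and> v \<in> V)"

definition connected_graph :: "'a set \<Rightarrow> ('a \<Rightarrow> 'a \<Rightarrow> bool) \<Rightarrow> bool" where
  "connected_graph V E \<longleftrightarrow> V \<noteq> {} \<and>
     (\<forall>u\<in>V. \<forall>v\<in>V. (u, v) \<in> {(x, y). E x y}\<^sup>*)"

definition edges :: "('a \<Rightarrow> 'a \<Rightarrow> bool) \<Rightarrow> 'a set set" where
  "edges E = {{u, v} | u v. E u v}"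

definition spanning_tree :: "'a set \<Rightarrow> ('a \<Rightarrow> 'a \<Rightarrow> bool) \<Rightarrow> ('a \<Rightarrow> 'a \<Rightarrow> bool) \<Rightarrow> 'a \<Rightarrow> bool" where
  "spanning_tree V E T s \<longleftrightarrow> graph V T \<and> (\<forall>u v. T u v \<longrightarrow> E u v) \<and> connected_graph V T
     \<and> card (edges T) = card V - 1 \<and> s \<in> V"

text \<open>It is a DFS order of (V,E) if for each position i > 0 the vertex at i is a
  neighbour of the most recently visited vertex (index j < i) that still has an
  unvisited neighbour, i.e. a neighbour among positions \<ge> i.\<close>
definition vertex_order :: "'a set \<Rightarrow> 'a list \<Rightarrow> bool" where
  "vertex_order V \<sigma> \<longleftrightarrow> distinct \<sigma> \<and> set \<sigma> = V"

definition has_unvisited_nb :: "('a \<Rightarrow> 'a \<Rightarrow> bool) \<Rightarrow> 'a list \<Rightarrow> nat \<Rightarrow> nat \<Rightarrow> bool" where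
  "has_unvisited_nb E \<sigma> k i \<longleftrightarrow> (\<exists>l. i \<le> l \<and> l < length \<sigma> \<and> E (\<sigma> ! k) (\<sigma> ! l))"

definition dfs_order :: "'a set \<Rightarrow> ('a \<Rightarrow> 'a \<Rightarrow> bool) \<Rightarrow> 'a list \<Rightarrow> bool" where
  "dfs_order V E \<sigma> \<longleftrightarrow> vertex_order V \<sigma> \<and> \<sigma> \<noteq> [] \<and>
     (\<forall>i. 0 < i \<and> i < length \<sigma> \<longrightarrow>
        (\<exists>j<i. has_unvisited_nb E \<sigma> j i \<and> (\<forall>k. j < k \<and> k < i \<longrightarrow> \<not> has_unvisited_nb E \<sigma> k i)
               \<and> E (\<sigma> ! j) (\<sigma> ! i)))"

text \<open>The L-tree of the vertex order \<sigma> (rooted at hd \<sigma>), as an undirected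
  adjacency relation: each v_i (i>0) is joined to its rightmost earlier
  neighbour v_j.\<close>
definition ltree :: "('a \<Rightarrow> 'a \<Rightarrow> bool) \<Rightarrow> 'a list \<Rightarrow> 'a \<Rightarrow> 'a \<Rightarrow> bool" where
  "ltree E \<sigma> u v \<longleftrightarrow> (\<exists>i j. i < length \<sigma> \<and> j < i \<and> E (\<sigma> ! j) (\<sigma> ! i) \<and>
      (\<forall>k. j < k \<and> k < i \<longrightarrow> \<not> E (\<sigma> ! k) (\<sigma> ! i)) \<and>
      ((u, v) = (\<sigma> ! j, \<sigma> ! i) \<or> (u, v) = (\<sigma> ! i, \<sigma> ! j)))"

definition is_dfs_ltree :: "'a set \<Rightarrow> ('a \<Rightarrow> 'a \<Rightarrow> bool) \<Rightarrow> ('a \<Rightarrow> 'a \<Rightarrow> bool) \<Rightarrow> 'a \<Rightarrow> bool" where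
  "is_dfs_ltree V E T s \<longleftrightarrow> spanning_tree V E T s \<and>
     (\<exists>\<tau>. dfs_order V E \<tau> \<and> hd \<tau> = s \<and> ltree E \<tau> = T)"

end

theory Submission
  imports Defs
begin

definition par :: "('a \<Rightarrow> 'a \<Rightarrow> bool) \<Rightarrow> 'a list \<Rightarrow> 'a \<Rightarrow> 'a \<Rightarrow> bool" where
  "par E \<tau> u v \<longleftrightarrow> (\<exists>i j. i < length \<tau> \<and> j < i \<and> E (\<tau> ! j) (\<tau> ! i) \<and>
      (\<forall>k. j < k \<and> k < i \<longrightarrow> \<not> E (\<tau> ! k) (\<tau> ! i)) \<and> u = \<tau> ! j \<and> v = \<tau> ! i)"

lemma ltree_par: "ltree E \<tau> u v \<longleftrightarrow> par E \<tau> u v \<or> par E \<tau> v u"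
  unfolding ltree_def par_def by blast

context
  fixes V :: "'a set" and E :: "'a \<Rightarrow> 'a \<Rightarrow> bool" and \<tau> \<sigma> :: "'a list"
  assumes tau: "dfs_order V E \<tau>"
  and symE: "\<And>u v. E u v \<Longrightarrow> E v u"
  and inV: "\<And>u v. E u v \<Longrightarrow> u \<in> V"
  and sig: "dfs_order V (ltree E \<tau>) \<sigma>"
  and hds: "hd \<sigma> = hd \<tau>"
begin

lemma dt: "distinct \<tau>" "set \<tau> = V" "\<tau> \<noteq> []"
  using tau unfolding dfs_order_def vertex_order_def by auto

lemma ds: "distinct \<sigma>" "set \<sigma> = V" "\<sigma> \<noteq> []"
  using sig unfolding dfs_order_def vertex_order_def by auto

lemma par_fun: "par E \<tau> u v \<Longrightarrow> par E \<tau> u' v \<Longrightarrow> u = u'"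
proof -
  assume a1: "par E \<tau> u v" and a2: "par E \<tau> u' v"
  from a1 obtain i j where A: "i < length \<tau>" "j<i" "E (\<tau>!j) (\<tau>!i)"
    "\<forall>k. j<k \<and> k<i \<longrightarrow> \<not>E (\<tau>!k) (\<tau>!i)" "u = \<tau>!j" "v = \<tau>!i"
    unfolding par_def by blast
  from a2 obtain i' j' where B: "i' < length \<tau>" "j'<i'" "E (\<tau>!j') (\<tau>!i')"
    "\<forall>k. j'<k \<and> k<i' \<longrightarrow> \<not>E (\<tau>!k) (\<tau>!i')" "u' = \<tau>!j'" "v = \<tau>!i'"
    unfolding par_def by blast
  have "i = i'" using A B dt(1) nth_eq_iff_index_eq by metis
  then have "j = j'" using A B by (metis linorder_neqE_nat)
  thus ?thesis using A B by simp
qed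

lemma par_pos: "par E \<tau> u v \<Longrightarrow> \<exists>i j. i < length \<tau> \<and> j < i \<and> u = \<tau>!j \<and> v = \<tau>!i"
  by (auto simp: par_def)

lemma par_root: "\<not> par E \<tau> u (hd \<tau>)"
proof
  assume "par E \<tau> u (hd \<tau>)"
  then obtain i j where "i < length \<tau>" "j < i" "hd \<tau> = \<tau>!i" using par_pos by blast
  moreover have "hd \<tau> = \<tau>!0" using dt(3) hd_conv_nth by blast
  ultimately show False using dt(1) nth_eq_iff_index_eq by fastforce
qed

lemma dfs_par: "b<length \<tau> \<Longrightarrow> j<b \<Longrightarrow> (\<forall>k. j<k \<and> k<b \<longrightarrow> \<not> has_unvisited_nb E \<tau> k b)
   \<Longrightarrow> E (\<tau>!j) (\<tau>!b) \<Longrightarrow> par E \<tau> (\<tau>!j) (\<tau>!b)"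
  unfolding par_def has_unvisited_nb_def by blast

lemma tau_anc: "b < length \<tau> \<Longrightarrow> a < b \<Longrightarrow> has_unvisited_nb E \<tau> a b \<Longrightarrow> (par E \<tau>)\<^sup>*\<^sup>* (\<tau>!a) (\<tau>!b)"
proof (induction b arbitrary: a rule: less_induct)
  case (less b)
  have "0 < b" using less by simp
  then obtain j where j: "j<b" "has_unvisited_nb E \<tau> j b"
     "\<forall>k. j<k \<and> k<b \<longrightarrow> \<not> has_unvisited_nb E \<tau> k b" "E (\<tau>!j) (\<tau>!b)"
    using tau less.prems(1) unfolding dfs_order_def by blast
  have pj: "par E \<tau> (\<tau>!j) (\<tau>!b)" using dfs_par j less.prems(1) by simp
  consider "a = j" | "a < j" | "j < a" by linarith
  then show ?case
  proof cases
    case 1 then show ?thesis using pj by simp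
  next
    case 2
    have "has_unvisited_nb E \<tau> a j" using less.prems(3) j(1) unfolding has_unvisited_nb_def
      by (meson le_trans less_imp_le)
    then have "(par E \<tau>)\<^sup>*\<^sup>* (\<tau>!a) (\<tau>!j)" using less.IH[of j a] j(1) less.prems(1) 2 by simp
    then show ?thesis using pj by (meson rtranclp.rtrancl_into_rtrancl)
  next
    case 3 then show ?thesis using j(3) less.prems by blast
  qed
qed

lemma tremaux: "E u v \<Longrightarrow> (par E \<tau>)\<^sup>*\<^sup>* u v \<or> (par E \<tau>)\<^sup>*\<^sup>* v u"
proof -
  assume e: "E u v"
  have "u \<in> set \<tau>" "v \<in> set \<tau>" using e inV symE dt(2) by blast+
  then obtain a b where ab: "a < length \<tau>" "u = \<tau>!a" "b < length \<tau>" "v = \<tau>!b"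
    by (metis in_set_conv_nth)
  consider "a < b" | "a = b" | "b < a" by linarith
  then show ?thesis
  proof cases
    case 1
    have "has_unvisited_nb E \<tau> a b" unfolding has_unvisited_nb_def using ab e by blast
    then show ?thesis using tau_anc ab 1 by blast
  next
    case 2 then show ?thesis using ab by simp
  next
    case 3
    have "has_unvisited_nb E \<tau> b a" unfolding has_unvisited_nb_def using ab e symE by blast
    then show ?thesis using tau_anc ab 3 by blast
  qed
qed

lemma sig_dfs: "0<i \<Longrightarrow> i<length \<sigma> \<Longrightarrow> \<exists>j<i. has_unvisited_nb (ltree E \<tau>) \<sigma> j i \<and>
   (\<forall>k. j<k \<and> k<i \<longrightarrow> \<not> has_unvisited_nb (ltree E \<tau>) \<sigma> k i) \<and> ltree E \<tau> (\<sigma>!j) (\<sigma>!i)"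
  using sig unfolding dfs_order_def by blast

lemma hd0: "\<sigma>!0 = hd \<tau>" using ds(3) hds hd_conv_nth by metis

lemma sig_earlier: "i < length \<sigma> \<Longrightarrow> par E \<tau> u (\<sigma>!i) \<Longrightarrow> \<exists>k<i. u = \<sigma>!k"
proof (induction i arbitrary: u rule: less_induct)
  case (less i)
  show ?case
  proof (cases "i = 0")
    case True then show ?thesis using less.prems hd0 par_root by simp
  next
    case False
    then obtain j where j: "j<i" "ltree E \<tau> (\<sigma>!j) (\<sigma>!i)" using sig_dfs less.prems(1) by blast
    have "\<not> par E \<tau> (\<sigma>!i) (\<sigma>!j)"
    proof
      assume "par E \<tau> (\<sigma>!i) (\<sigma>!j)"
      then obtain k where "k<j" "\<sigma>!i = \<sigma>!k" using less.IH[of j] j(1) less.prems(1) by auto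
      then show False using ds(1) nth_eq_iff_index_eq j(1) less.prems(1) by fastforce
    qed
    then have "par E \<tau> (\<sigma>!j) (\<sigma>!i)" using j ltree_par by metis
    then show ?thesis using par_fun less.prems(2) j(1) by blast
  qed
qed

lemma sig_par: "i<length \<sigma> \<Longrightarrow> j<i \<Longrightarrow> ltree E \<tau> (\<sigma>!j) (\<sigma>!i) \<Longrightarrow> par E \<tau> (\<sigma>!j) (\<sigma>!i)"
proof -
  assume a: "i<length \<sigma>" "j<i" "ltree E \<tau> (\<sigma>!j) (\<sigma>!i)"
  have "\<not> par E \<tau> (\<sigma>!i) (\<sigma>!j)"
  proof
    assume "par E \<tau> (\<sigma>!i) (\<sigma>!j)"
    then obtain k where "k<j" "\<sigma>!i = \<sigma>!k" using sig_earlier[of j] a by auto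
    then show False using ds(1) nth_eq_iff_index_eq a by fastforce
  qed
  then show ?thesis using a ltree_par by metis
qed

lemma sig_anc_mono_aux: "(par E \<tau>)\<^sup>*\<^sup>* x y \<Longrightarrow> \<forall>b. b < length \<sigma> \<longrightarrow> y = \<sigma>!b \<longrightarrow> (\<exists>a\<le>b. x = \<sigma>!a)"
proof (induction rule: rtranclp_induct)
  case base then show ?case by blast
next
  case (step y z)
  show ?case
  proof (intro allI impI)
    fix b assume b: "b < length \<sigma>" "z = \<sigma>!b"
    obtain m where m: "m < b" "y = \<sigma>!m" using sig_earlier b step(2) by blast
    have "m < length \<sigma>" using m b by simp
    then obtain a where "a \<le> m" "x = \<sigma>!a" using step.IH m(2) by blast
    then show "\<exists>a\<le>b. x = \<sigma>!a" using m(1) by (intro exI[of _ a]) simp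
  qed
qed

lemma sig_anc_mono: "(par E \<tau>)\<^sup>*\<^sup>* (\<sigma>!a) (\<sigma>!b) \<Longrightarrow> a < length \<sigma> \<Longrightarrow> b < length \<sigma> \<Longrightarrow> a \<le> b"
proof -
  assume a: "(par E \<tau>)\<^sup>*\<^sup>* (\<sigma>!a) (\<sigma>!b)" "a < length \<sigma>" "b < length \<sigma>"
  then obtain c where "c \<le> b" "\<sigma>!a = \<sigma>!c" using sig_anc_mono_aux by blast
  then show ?thesis using ds(1) nth_eq_iff_index_eq a by fastforce
qed

lemma sig_cross: "(par E \<tau>)\<^sup>*\<^sup>* x y \<Longrightarrow> \<forall>k l. x = \<sigma>!k \<longrightarrow> y = \<sigma>!l \<longrightarrow> k < i \<longrightarrow> i \<le> l \<longrightarrow> l < length \<sigma> \<longrightarrow>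
   (\<exists>k' l'. k \<le> k' \<and> k' < i \<and> i \<le> l' \<and> l' < length \<sigma> \<and> par E \<tau> (\<sigma>!k') (\<sigma>!l'))"
proof (induction rule: rtranclp_induct)
  case base
  show ?case
  proof (intro allI impI)
    fix k l assume h: "x = \<sigma>!k" "x = \<sigma>!l" "k < i" "i \<le> l" "l < length \<sigma>"
    then show "\<exists>k' l'. k \<le> k' \<and> k' < i \<and> i \<le> l' \<and> l' < length \<sigma> \<and> par E \<tau> (\<sigma>!k') (\<sigma>!l')"
    proof -
      have "k < length \<sigma>" using h by simp
      then have "k = l" using h ds(1) nth_eq_iff_index_eq by metis
      then show ?thesis using h by simp
    qed
  qed
next
  case (step y z)
  show ?case
  proof (intro allI impI)
    fix k l assume h: "x = \<sigma>!k" "z = \<sigma>!l" "k < i" "i \<le> l" "l < length \<sigma>"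
    obtain m where m: "m < l" "y = \<sigma>!m" using sig_earlier h step(2) by blast
    show "\<exists>k' l'. k \<le> k' \<and> k' < i \<and> i \<le> l' \<and> l' < length \<sigma> \<and> par E \<tau> (\<sigma>!k') (\<sigma>!l')"
    proof (cases "i \<le> m")
      case True
      have "m < length \<sigma>" using m h by simp
      then show ?thesis using step.IH[rule_format, of k m] h(1,3) m(2) True by blast
    next
      case False
      have "k < length \<sigma>" "m < length \<sigma>" using h m by simp_all
      then have "k \<le> m" using sig_anc_mono[of k m] step(1) h(1) m(2) by simp
      then show ?thesis using False h m step(2) by (intro exI[of _ m] exI[of _ l]) simp
    qed
  qed
qed

lemma lt_E: "ltree E \<tau> u v \<Longrightarrow> E u v"
  unfolding ltree_def using symE by (auto simp del: nth_mem)

lemma main: "i<length \<sigma> \<Longrightarrow> j<i \<Longrightarrow> (\<forall>k. j<k \<and> k<i \<longrightarrow> \<not> has_unvisited_nb (ltree E \<tau>) \<sigma> k i)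
   \<Longrightarrow> j<k \<Longrightarrow> k<i \<Longrightarrow> \<not> has_unvisited_nb E \<sigma> k i"
proof
  assume a: "i<length \<sigma>" "j<i" "\<forall>k. j<k \<and> k<i \<longrightarrow> \<not> has_unvisited_nb (ltree E \<tau>) \<sigma> k i"
    "j<k" "k<i" "has_unvisited_nb E \<sigma> k i"
  from a(6) obtain l where l: "i \<le> l" "l < length \<sigma>" "E (\<sigma>!k) (\<sigma>!l)"
    unfolding has_unvisited_nb_def by blast
  have kl: "k < length \<sigma>" using a(1,5) by simp
  have tr: "(par E \<tau>)\<^sup>*\<^sup>* (\<sigma>!k) (\<sigma>!l) \<or> (par E \<tau>)\<^sup>*\<^sup>* (\<sigma>!l) (\<sigma>!k)"
    by (rule tremaux[OF l(3)])
  show False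
  proof (cases "(par E \<tau>)\<^sup>*\<^sup>* (\<sigma>!k) (\<sigma>!l)")
    case True
    have ex: "\<exists>k' l'. k \<le> k' \<and> k' < i \<and> i \<le> l' \<and> l' < length \<sigma> \<and> par E \<tau> (\<sigma>!k') (\<sigma>!l')"
      using sig_cross[OF True] a(5) l(1,2) by simp
    then obtain k' l' where c: "k \<le> k'" "k' < i" "i \<le> l'" "l' < length \<sigma>" "par E \<tau> (\<sigma>!k') (\<sigma>!l')"
      by blast
    have "ltree E \<tau> (\<sigma>!k') (\<sigma>!l')" using c(5) by (simp add: ltree_par)
    then have "has_unvisited_nb (ltree E \<tau>) \<sigma> k' i"
      unfolding has_unvisited_nb_def using c(3,4) by blast
    moreover have "j < k'" using a(4) c(1) by simp
    moreover have "\<not> has_unvisited_nb (ltree E \<tau>) \<sigma> k' i" using a(3) calculation(2) c(2) by simp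
    ultimately show False by simp
  next
    case False
    then have "(par E \<tau>)\<^sup>*\<^sup>* (\<sigma>!l) (\<sigma>!k)" using tr by simp
    then have "l \<le> k" using sig_anc_mono[of l k] kl l(2) by simp
    then show False using a(5) l(1) by simp
  qed
qed

lemma final1: "dfs_order V E \<sigma>"
  unfolding dfs_order_def
proof (intro conjI allI impI)
  show "vertex_order V \<sigma>" "\<sigma> \<noteq> []" using ds unfolding vertex_order_def by simp_all
next
  fix i assume i: "0 < i \<and> i < length \<sigma>"
  then obtain j where j: "j<i" "has_unvisited_nb (ltree E \<tau>) \<sigma> j i"
    "\<forall>k. j<k \<and> k<i \<longrightarrow> \<not> has_unvisited_nb (ltree E \<tau>) \<sigma> k i" "ltree E \<tau> (\<sigma>!j) (\<sigma>!i)"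
    using sig_dfs by blast
  from j(2) obtain l where l: "i \<le> l" "l < length \<sigma>" "ltree E \<tau> (\<sigma>!j) (\<sigma>!l)"
    unfolding has_unvisited_nb_def by blast
  have "has_unvisited_nb E \<sigma> j i" unfolding has_unvisited_nb_def
    using l(1,2) lt_E[OF l(3)] by blast
  moreover have "\<forall>k. j < k \<and> k < i \<longrightarrow> \<not> has_unvisited_nb E \<sigma> k i"
  proof (intro allI impI)
    fix k assume k: "j < k \<and> k < i"
    show "\<not> has_unvisited_nb E \<sigma> k i"
      by (rule main[of i j k]) (use i j(1,3) k in simp_all)
  qed
  moreover have "E (\<sigma> ! j) (\<sigma> ! i)" using lt_E[OF j(4)] .
  ultimately show "\<exists>j<i. has_unvisited_nb E \<sigma> j i \<and> (\<forall>k. j < k \<and> k < i \<longrightarrow> \<not> has_unvisited_nb E \<sigma> k i)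
             \<and> E (\<sigma> ! j) (\<sigma> ! i)" using j(1) by blast
qed

lemma key: "0 < i \<Longrightarrow> i < length \<sigma> \<Longrightarrow> \<exists>j<i. par E \<tau> (\<sigma>!j) (\<sigma>!i) \<and> E (\<sigma>!j) (\<sigma>!i) \<and>
    (\<forall>k. j<k \<and> k<i \<longrightarrow> \<not> E (\<sigma>!k) (\<sigma>!i))"
proof -
  assume i: "0 < i" "i < length \<sigma>"
  then obtain j where j: "j<i" "has_unvisited_nb (ltree E \<tau>) \<sigma> j i"
    "\<forall>k. j<k \<and> k<i \<longrightarrow> \<not> has_unvisited_nb (ltree E \<tau>) \<sigma> k i" "ltree E \<tau> (\<sigma>!j) (\<sigma>!i)"
    using sig_dfs by blast
  have "\<forall>k. j<k \<and> k<i \<longrightarrow> \<not> E (\<sigma>!k) (\<sigma>!i)"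
  proof (intro allI impI notI)
    fix k assume k: "j<k \<and> k<i" and e: "E (\<sigma>!k) (\<sigma>!i)"
    have "has_unvisited_nb E \<sigma> k i" unfolding has_unvisited_nb_def
      using i(2) e by blast
    moreover have "\<not> has_unvisited_nb E \<sigma> k i"
      by (rule main[of i j k]) (use i j(1,3) k in simp_all)
    ultimately show False by simp
  qed
  moreover have "par E \<tau> (\<sigma>!j) (\<sigma>!i)" by (rule sig_par[OF i(2) j(1) j(4)])
  moreover have "E (\<sigma>!j) (\<sigma>!i)" using lt_E[OF j(4)] .
  ultimately show ?thesis using j(1) by blast
qed

lemma final2a: "ltree E \<sigma> u v \<Longrightarrow> ltree E \<tau> u v"
proof -
  assume "ltree E \<sigma> u v"
  then obtain i j' where h: "i < length \<sigma>" "j' < i" "E (\<sigma>!j') (\<sigma>!i)"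
    "\<forall>k. j' < k \<and> k < i \<longrightarrow> \<not> E (\<sigma>!k) (\<sigma>!i)"
    "(u, v) = (\<sigma>!j', \<sigma>!i) \<or> (u, v) = (\<sigma>!i, \<sigma>!j')"
    unfolding ltree_def by (elim exE conjE) (rule that; assumption)
  have "0 < i" using h(2) by simp
  then obtain j where j: "j<i" "par E \<tau> (\<sigma>!j) (\<sigma>!i)" "E (\<sigma>!j) (\<sigma>!i)"
    "\<forall>k. j<k \<and> k<i \<longrightarrow> \<not> E (\<sigma>!k) (\<sigma>!i)" using key h(1) by blast
  have "\<not> j' < j" using h(4) j(1,3) by blast
  moreover have "\<not> j < j'" using j(4) h(2,3) by blast
  ultimately have "j = j'" by simp
  then have p: "par E \<tau> (\<sigma>!j') (\<sigma>!i)" using j(2) by simp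
  have "ltree E \<tau> (\<sigma>!j') (\<sigma>!i)" "ltree E \<tau> (\<sigma>!i) (\<sigma>!j')"
    by (simp_all add: ltree_par p)
  then show "ltree E \<tau> u v" using h(5) by (elim disjE) simp_all
qed

lemma gen: "par E \<tau> x y \<Longrightarrow> ltree E \<sigma> x y \<and> ltree E \<sigma> y x"
proof -
  assume p: "par E \<tau> x y"
  obtain i0 j0 where "i0 < length \<tau>" "y = \<tau>!i0" using par_pos[OF p] by blast
  then have "y \<in> set \<sigma>" using dt(2) ds(2) nth_mem by metis
  then obtain i where i: "i < length \<sigma>" "y = \<sigma>!i" by (metis in_set_conv_nth)
  have "i \<noteq> 0"
  proof
    assume "i = 0"
    then have "y = hd \<tau>" using i(2) hd0 by simp
    then show False using par_root p by blast
  qed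
  then obtain j where j: "j<i" "par E \<tau> (\<sigma>!j) (\<sigma>!i)" "E (\<sigma>!j) (\<sigma>!i)"
    "\<forall>k. j<k \<and> k<i \<longrightarrow> \<not> E (\<sigma>!k) (\<sigma>!i)" using key i(1) by blast
  have "x = \<sigma>!j" using par_fun[OF p] j(2) i(2) by blast
  have l1: "ltree E \<sigma> (\<sigma>!j) (\<sigma>!i)" unfolding ltree_def
    by (rule exI[of _ i], rule exI[of _ j]) (use i(1) j(1,3,4) in simp)
  have l2: "ltree E \<sigma> (\<sigma>!i) (\<sigma>!j)" unfolding ltree_def
    by (rule exI[of _ i], rule exI[of _ j]) (use i(1) j(1,3,4) in simp)
  show ?thesis using l1 l2 i(2) \<open>x = \<sigma>!j\<close> by simp
qed

lemma final: "dfs_order V E \<sigma> \<and> ltree E \<sigma> = ltree E \<tau>"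
proof
  show "dfs_order V E \<sigma>" by (rule final1)
  show "ltree E \<sigma> = ltree E \<tau>"
  proof (intro ext iffI)
    fix u v assume "ltree E \<sigma> u v"
    then show "ltree E \<tau> u v" by (rule final2a)
  next
    fix u v assume "ltree E \<tau> u v"
    then have "par E \<tau> u v \<or> par E \<tau> v u" by (simp add: ltree_par)
    then show "ltree E \<sigma> u v"
    proof
      assume "par E \<tau> u v"
      then show ?thesis using gen[of u v] by simp
    next
      assume "par E \<tau> v u"
      then show ?thesis using gen[of v u] by simp
    qed
  qed
qed

end

theorem lemma6:
  fixes V :: "'a set" and E T :: "'a \<Rightarrow> 'a \<Rightarrow> bool" and s :: 'a and \<sigma> :: "'a list"
  assumes "graph V E" and "connected_graph V E"
    and "is_dfs_ltree V E T s"
    and "dfs_order V T \<sigma>" and "hd \<sigma> = s"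
  shows "dfs_order V E \<sigma> \<and> ltree E \<sigma> = T"
proof -
  obtain \<tau> where t: "dfs_order V E \<tau>" "hd \<tau> = s" "ltree E \<tau> = T"
    using assms(3) unfolding is_dfs_ltree_def by blast
  have g1: "\<And>u v. E u v \<Longrightarrow> E v u"
    using assms(1) unfolding graph_def by blast
  have g2: "\<And>u v. E u v \<Longrightarrow> u \<in> V"
    using assms(1) unfolding graph_def by blast
  have A: "dfs_order V (ltree E \<tau>) \<sigma>" using assms(4) t(3) by simp
  have B: "hd \<sigma> = hd \<tau>" using assms(5) t(2) by simp
  have "dfs_order V E \<sigma> \<and> ltree E \<sigma> = ltree E \<tau>"
    by (rule final[OF t(1)]) (erule g1, erule g2, rule A, rule B)
  then show ?thesis using t(3) by simp
qed

end
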